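(* Let $\ell\ge1$, $N\ge1$ be integers and $l\ge1$ real. For $1\le n\le N$ let $A_n=\{1\le m\le N: d_\ell(n,m)\le l\}$, and for integers $k\ge0$ let $\mathcal A_n(k)=\{1\le m\le N: d_\ell(A_n,A_m)=k\}$. Then for all $1\le n\le N$ and $k\ge0$, $$|A_n|\le K_1 l\quad\text{and}\quad|\mathcal A_n(k)|\le K_2 l,$$ with $K_1=3\ell^2$ and $K_2=4\ell^6(\ell^2+2)$.
   Context: For $a,b\in\mathbb R$, $d_\ell(a,b)=\min_{1\le i,j\le\ell}|ia-jb|$, and for $A,B\subset\mathbb R$, $d_\ell(A,B)=\inf\{d_\ell(a,b):a\in A,b\in B\}$. *)

theory Defs
  imports Complex_Main
begin

definition d_ell :: "nat \<Rightarrow> real \<Rightarrow> real \<Rightarrow> real" where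
  "d_ell L a b = Min {\<bar>real i * a - real j * b\<bar> | i j. i \<in> {1..L} \<and> j \<in> {1..L}}"

definition d_ell_set :: "nat \<Rightarrow> real set \<Rightarrow> real set \<Rightarrow> real" where
  "d_ell_set L A B = Inf {d_ell L a b | a b. a \<in> A \<and> b \<in> B}"

definition A_set :: "nat \<Rightarrow> nat \<Rightarrow> real \<Rightarrow> nat \<Rightarrow> nat set" where
  "A_set L N l n = {m \<in> {1..N}. d_ell L (real n) (real m) \<le> l}"

definition calA_set :: "nat \<Rightarrow> nat \<Rightarrow> real \<Rightarrow> nat \<Rightarrow> nat \<Rightarrow> nat set" where
  "calA_set L N l n k = {m \<in> {1..N}.
     d_ell_set L (real ` A_set L N l n) (real ` A_set L N l m) = real k}"

end

theory Submission
  imports Defs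
begin

lemma count_int:
  fixes c w :: real
  assumes "w \<ge> 0"
  shows "finite {m::nat. \<bar>real m - c\<bar> \<le> w}"
    and "real (card {m::nat. \<bar>real m - c\<bar> \<le> w}) \<le> 2*w+1"
proof -
  let ?S = "{m::nat. \<bar>real m - c\<bar> \<le> w}"
  have sub: "?S \<subseteq> {0..nat \<lfloor>c+w\<rfloor>}"
  proof
    fix m assume "m \<in> ?S"
    hence "real m \<le> c + w" by auto
    hence "int m \<le> \<lfloor>c+w\<rfloor>" by (simp add: le_floor_iff)
    thus "m \<in> {0..nat \<lfloor>c+w\<rfloor>}" by auto
  qed
  show fin: "finite ?S" using finite_subset[OF sub] by auto
  show "real (card ?S) \<le> 2*w+1"
  proof (cases "?S = {}")
    case True then show ?thesis using assms by simp
  next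
    case False
    define m0 where "m0 = Min ?S"
    have m0in: "m0 \<in> ?S" using Min_in[OF fin False] m0_def by simp
    have sub2: "?S \<subseteq> {m0..m0 + nat \<lfloor>2*w\<rfloor>}"
    proof
      fix m assume mS: "m \<in> ?S"
      have "m0 \<le> m" using Min_le[OF fin mS] m0_def by simp
      moreover have "real m - real m0 \<le> 2*w" using mS m0in by auto
      hence "real (m - m0) \<le> 2*w" using \<open>m0 \<le> m\<close> by (simp add: of_nat_diff)
      hence "int (m - m0) \<le> \<lfloor>2*w\<rfloor>" by (simp add: le_floor_iff)
      hence "m - m0 \<le> nat \<lfloor>2*w\<rfloor>" by linarith
      ultimately show "m \<in> {m0..m0 + nat \<lfloor>2*w\<rfloor>}" by auto
    qed
    have "card ?S \<le> card {m0..m0 + nat \<lfloor>2*w\<rfloor>}" by (rule card_mono) (auto simp: sub2)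
    also have "\<dots> = nat \<lfloor>2*w\<rfloor> + 1" by simp
    finally have "real (card ?S) \<le> real (nat \<lfloor>2*w\<rfloor>) + 1" by linarith
    also have "real (nat \<lfloor>2*w\<rfloor>) \<le> 2*w" using assms by linarith
    finally show ?thesis by linarith
  qed
qed

lemma cover:
  fixes C :: "real set" and w :: real and S :: "nat set"
  assumes "finite C" "w \<ge> 0" "\<And>m. m \<in> S \<Longrightarrow> \<exists>c\<in>C. \<bar>real m - c\<bar> \<le> w"
  shows "real (card S) \<le> real (card C) * (2*w+1)"
proof -
  let ?T = "\<lambda>c. {m::nat. \<bar>real m - c\<bar> \<le> w}"
  have sub: "S \<subseteq> (\<Union>c\<in>C. ?T c)" using assms(3) by blast
  have fin: "finite (\<Union>c\<in>C. ?T c)" using assms(1) count_int(1)[OF assms(2)] by auto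
  have "card S \<le> card (\<Union>c\<in>C. ?T c)" by (rule card_mono[OF fin sub])
  also have "\<dots> \<le> (\<Sum>c\<in>C. card (?T c))" by (rule card_UN_le[OF assms(1)])
  finally have "real (card S) \<le> (\<Sum>c\<in>C. real (card (?T c)))" by (metis of_nat_le_iff of_nat_sum)
  also have "\<dots> \<le> (\<Sum>c\<in>C. 2*w+1)" by (rule sum_mono) (rule count_int(2)[OF assms(2)])
  finally show ?thesis by simp
qed

lemma d_ell_set_eq:
  "{\<bar>real i * a - real j * b\<bar> | i j. i \<in> {1..L} \<and> j \<in> {1..L}}
   = (\<lambda>(i,j). \<bar>real i * a - real j * b\<bar>) ` ({1..L} \<times> {1..L})"
  by force

lemma d_ell_attained:
  assumes "L \<ge> 1"
  shows "\<exists>i\<in>{1..L}. \<exists>j\<in>{1..L}. d_ell L a b = \<bar>real i * a - real j * b\<bar>"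
proof -
  have ne: "{1..L} \<times> {1..L} \<noteq> {}" using assms by auto
  have "d_ell L a b \<in> (\<lambda>(i,j). \<bar>real i * a - real j * b\<bar>) ` ({1..L} \<times> {1..L})"
    unfolding d_ell_def d_ell_set_eq by (rule Min_in) (use ne in auto)
  thus ?thesis by auto
qed

lemma d_ell_le:
  assumes "i \<in> {1..L}" "j \<in> {1..L}"
  shows "d_ell L a b \<le> \<bar>real i * a - real j * b\<bar>"
  unfolding d_ell_def d_ell_set_eq by (rule Min_le) (use assms in auto)

lemma d_ell_self:
  assumes "L \<ge> 1" shows "d_ell L a a \<le> l \<longleftrightarrow> 0 \<le> l"
proof -
  have "d_ell L a a \<le> 0" using d_ell_le[of 1 L 1 a a] assms by simp
  moreover have "d_ell L a a \<ge> 0" using d_ell_attained[OF assms, of a a] by auto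
  ultimately show ?thesis by linarith
qed

lemma self_in_A:
  assumes "L \<ge> 1" "l \<ge> 0" "m \<in> {1..N}"
  shows "m \<in> A_set L N l m"
  using assms d_ell_self[OF assms(1)] unfolding A_set_def by auto

lemma d_ell_set_attained:
  assumes "finite A" "finite B" "A \<noteq> {}" "B \<noteq> {}"
  shows "\<exists>a\<in>A. \<exists>b\<in>B. d_ell_set L A B = d_ell L a b"
proof -
  have eq: "{d_ell L a b | a b. a \<in> A \<and> b \<in> B} = (\<lambda>(a,b). d_ell L a b) ` (A \<times> B)" by auto
  have "d_ell_set L A B = Min ((\<lambda>(a,b). d_ell L a b) ` (A \<times> B))"
    unfolding d_ell_set_def eq by (rule cInf_eq_Min) (use assms in auto)
  also have "\<dots> \<in> (\<lambda>(a,b). d_ell L a b) ` (A \<times> B)"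
    by (rule Min_in) (use assms in auto)
  finally show ?thesis by auto
qed

lemma frac_bound:
  fixes x y z p q M :: real
  assumes "1 \<le> x" "1 \<le> y" "1 \<le> z" "0 \<le> p" "0 \<le> q" "p \<le> M" "q \<le> M"
  shows "\<bar>p*q/(x*y*z)\<bar> \<le> M^2"
proof -
  have "1 \<le> x*y" using assms one_le_mult_iff by (metis mult_mono' zero_le_one mult_1_left)
  hence xy: "1 \<le> x*y*z" using assms by (metis mult_mono' zero_le_one mult_1_left)
  have pq: "0 \<le> p*q" using assms by simp
  have "p*q/(x*y*z) \<le> p*q" using xy pq by (simp add: divide_le_eq mult_le_cancel_left1 not_less)
  also have "p*q \<le> M*M" using assms by (simp add: mult_mono)
  finally show ?thesis using assms xy by (simp add: power2_eq_square)
qed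

theorem mainTheorem6:
  fixes L N n k :: nat and l :: real
  assumes "L \<ge> 1" and "N \<ge> 1" and "l \<ge> 1" and "n \<in> {1..N}"
  shows "real (card (A_set L N l n)) \<le> 3 * real L ^ 2 * l
    \<and> real (card (calA_set L N l n k)) \<le> 4 * real L ^ 6 * (real L ^ 2 + 2) * l"
proof
  show "real (card (A_set L N l n)) \<le> 3 * real L ^ 2 * l"
  proof -
    let ?C = "(\<lambda>(i,j). real i * real n / real j) ` ({1..L} \<times> {1..L})"
    have "real (card (A_set L N l n)) \<le> real (card ?C) * (2*l+1)"
    proof (rule cover)
      show "finite ?C" by auto
      show "0 \<le> l" using assms by simp
      fix m assume "m \<in> A_set L N l n"
      hence dl: "d_ell L (real n) (real m) \<le> l" unfolding A_set_def by auto
      obtain i j where ij: "i \<in> {1..L}" "j \<in> {1..L}"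
        "d_ell L (real n) (real m) = \<bar>real i * real n - real j * real m\<bar>"
        using d_ell_attained[OF assms(1)] by blast
      have jpos: "real j \<ge> 1" using ij by auto
      have "real m - real i * real n / real j = - (real i * real n - real j * real m) / real j"
        using jpos by (simp add: field_simps)
      hence "\<bar>real m - real i * real n / real j\<bar> = \<bar>real i * real n - real j * real m\<bar> / real j"
        using jpos by simp
      also have "\<dots> \<le> \<bar>real i * real n - real j * real m\<bar>"
        using jpos by (simp add: divide_le_eq mult_le_cancel_left1)
      also have "\<dots> \<le> l" using ij dl by simp
      finally show "\<exists>c\<in>?C. \<bar>real m - c\<bar> \<le> l" using ij by force
    qed
    also have "real (card ?C) \<le> real L ^ 2"
    proof -
      have "card ?C \<le> card ({1..L} \<times> {1..L})" by (rule card_image_le) auto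
      also have "\<dots> = L^2" by (simp add: power2_eq_square)
      finally show ?thesis by (metis of_nat_le_iff of_nat_power)
    qed
    hence "real (card ?C) * (2*l+1) \<le> real L ^ 2 * (2*l+1)"
      using assms by (intro mult_right_mono) auto
    also have "\<dots> \<le> 3 * real L ^ 2 * l" using assms by (simp add: algebra_simps)
    finally show ?thesis by simp
  qed
next
  show "real (card (calA_set L N l n k)) \<le> 4 * real L ^ 6 * (real L ^ 2 + 2) * l"
  proof -
    let ?I = "{1..L} \<times> {1..L} \<times> {1..L} \<times> {1..L} \<times> {1..L} \<times> {1..L} \<times> {-1, 1::real}"
    define cen where "cen = (\<lambda>(i0::nat,j0::nat,i1::nat,j1::nat,i2::nat,j2::nat,s::real).
        real j2 / real i2 * (real i1 / real j1 * (real i0 * real n / real j0) - s * real k / real j1))"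
    let ?C = "cen ` ?I"
    let ?w = "(real L ^ 2 + 1) * l"
    have finA: "\<And>x. finite (A_set L N l x)" unfolding A_set_def by auto
    have "real (card (calA_set L N l n k)) \<le> real (card ?C) * (2 * ?w + 1)"
    proof (rule cover)
      show "finite ?C" by auto
      show "0 \<le> ?w" using assms by simp
      fix m assume "m \<in> calA_set L N l n k"
      hence mN: "m \<in> {1..N}" and D: "d_ell_set L (real ` A_set L N l n) (real ` A_set L N l m) = real k"
        unfolding calA_set_def by auto
      have nA: "n \<in> A_set L N l n" using self_in_A assms by simp
      have mA: "m \<in> A_set L N l m" using self_in_A assms mN by simp
      obtain a' b' where a'in: "a' \<in> real ` A_set L N l n" and b'in: "b' \<in> real ` A_set L N l m"
        and Dab: "d_ell_set L (real ` A_set L N l n) (real ` A_set L N l m) = d_ell L a' b'"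
        using d_ell_set_attained[of "real ` A_set L N l n" "real ` A_set L N l m" L] finA nA mA
        by blast
      obtain a where aA: "a \<in> A_set L N l n" and a': "a' = real a" using a'in by auto
      obtain b where bA: "b \<in> A_set L N l m" and b': "b' = real b" using b'in by auto
      have "d_ell L (real n) (real a) \<le> l" using aA unfolding A_set_def by auto
      moreover obtain i0 j0 where ij0: "i0 \<in> {1..L}" "j0 \<in> {1..L}"
        "d_ell L (real n) (real a) = \<bar>real i0 * real n - real j0 * real a\<bar>"
        using d_ell_attained[OF assms(1)] by blast
      ultimately have h0: "\<bar>real i0 * real n - real j0 * real a\<bar> \<le> l" by simp
      have "d_ell L (real m) (real b) \<le> l" using bA unfolding A_set_def by auto
      moreover obtain i2 j2 where ij2: "i2 \<in> {1..L}" "j2 \<in> {1..L}"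
        "d_ell L (real m) (real b) = \<bar>real i2 * real m - real j2 * real b\<bar>"
        using d_ell_attained[OF assms(1)] by blast
      ultimately have h2: "\<bar>real i2 * real m - real j2 * real b\<bar> \<le> l" by simp
      obtain i1 j1 where ij1: "i1 \<in> {1..L}" "j1 \<in> {1..L}"
        "d_ell L a' b' = \<bar>real i1 * a' - real j1 * b'\<bar>"
        using d_ell_attained[OF assms(1)] by blast
      have h1: "\<bar>real i1 * real a - real j1 * real b\<bar> = real k" using ij1 D Dab a' b' by simp
      define s :: real where "s = (if real i1 * real a - real j1 * real b \<ge> 0 then 1 else -1)"
      have sI: "s \<in> {-1,1}" unfolding s_def by auto
      have hs: "real i1 * real a - real j1 * real b = s * real k" using h1 unfolding s_def
        by (cases "real i1 * real a - real j1 * real b \<ge> 0") auto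
      define e0 where "e0 = real j0 * real a - real i0 * real n"
      define e2 where "e2 = real i2 * real m - real j2 * real b"
      have pos: "real i0 \<ge> 1" "real j0 \<ge> 1" "real i1 \<ge> 1" "real j1 \<ge> 1" "real i2 \<ge> 1" "real j2 \<ge> 1"
        using ij0 ij1 ij2 by auto
      have upb: "real i0 \<le> L" "real j0 \<le> L" "real i1 \<le> L" "real j1 \<le> L" "real i2 \<le> L" "real j2 \<le> L"
        using ij0 ij1 ij2 by auto
      have ea: "real a = (real i0 * real n + e0) / real j0" using pos unfolding e0_def by (simp add: field_simps)
      have eb: "real b = (real i1 * real a - s * real k) / real j1" using pos hs by (simp add: field_simps)
      have em: "real m = (real j2 * real b + e2) / real i2" using pos unfolding e2_def by (simp add: field_simps)
      have key: "real m - cen (i0,j0,i1,j1,i2,j2,s)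
          = (real j2 * real i1 / (real i2 * real j1 * real j0)) * e0 + e2 / real i2"
        unfolding cen_def using pos em eb ea by (simp add: field_simps)
      have fac: "\<bar>real j2 * real i1 / (real i2 * real j1 * real j0)\<bar> \<le> real L ^ 2"
        using pos upb by (intro frac_bound) simp_all
      have t1: "\<bar>(real j2 * real i1 / (real i2 * real j1 * real j0)) * e0\<bar> \<le> real L ^ 2 * l"
        unfolding abs_mult using fac h0 unfolding e0_def
        by (intro mult_mono) (auto simp: abs_minus_commute)
      have t2: "\<bar>e2 / real i2\<bar> \<le> l"
      proof -
        have "\<bar>e2 / real i2\<bar> = \<bar>e2\<bar> / real i2" using pos by simp
        also have "\<dots> \<le> \<bar>e2\<bar> / 1" using pos by (intro divide_left_mono) simp_all
        also have "\<dots> = \<bar>e2\<bar>" by simp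
        also have "\<dots> \<le> l" using h2 unfolding e2_def by simp
        finally show ?thesis .
      qed
      have "\<bar>real m - cen (i0,j0,i1,j1,i2,j2,s)\<bar> \<le> ?w"
      proof -
        have tri: "\<bar>(real j2 * real i1 / (real i2 * real j1 * real j0)) * e0 + e2 / real i2\<bar>
          \<le> \<bar>(real j2 * real i1 / (real i2 * real j1 * real j0)) * e0\<bar> + \<bar>e2 / real i2\<bar>"
          by (rule abs_triangle_ineq)
        have "?w = real L ^ 2 * l + l" by (simp add: distrib_right)
        moreover have "\<bar>(real j2 * real i1 / (real i2 * real j1 * real j0)) * e0 + e2 / real i2\<bar>
          \<le> real L ^ 2 * l + l" using tri add_mono[OF t1 t2] by (rule order_trans)
        ultimately show ?thesis unfolding key by simp
      qed
      moreover have "(i0,j0,i1,j1,i2,j2,s) \<in> ?I" using ij0 ij1 ij2 sI by auto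
      ultimately show "\<exists>c\<in>?C. \<bar>real m - c\<bar> \<le> ?w" by blast
    qed
    also have "real (card ?C) \<le> real L ^ 6 * 2"
    proof -
      have "card ?C \<le> card ?I" by (rule card_image_le) auto
      also have "\<dots> = L^6 * 2" by (simp add: card_cartesian_product power_numeral_reduce)
      finally have "real (card ?C) \<le> real (L^6 * 2)" by (rule of_nat_mono)
      thus ?thesis by simp
    qed
    hence "real (card ?C) * (2 * ?w + 1) \<le> real L ^ 6 * 2 * (2 * ?w + 1)"
      using assms by (intro mult_right_mono) auto
    also have "\<dots> \<le> 4 * real L ^ 6 * (real L ^ 2 + 2) * l"
    proof -
      have L6: "real L ^ 6 \<ge> 0" by simp
      have "2 * real L ^ 6 \<le> 4 * real L ^ 6 * l" using assms L6 by (simp add: mult_left_mono)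
      thus ?thesis by (simp add: algebra_simps)
    qed
    finally show ?thesis by simp
  qed
qed

end
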